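(* Let $P=(p_{ij})$ be the transition matrix of an absorbing Markov chain on states $1,\dots,s$, where states $1,\dots,r$ are transient and states $r+1,\dots,s$ are absorbing. Assume all transition probabilities are rational and, for each transient state $i$, write $p_{ij}=r_{ij}/r_i$ with $r_i$ a positive integer and $r_{ij}$ nonnegative integers (so $\sum_{j=1}^s r_{ij}=r_i$). Fix a transient state $u$ and run the chip-moving procedure (Engel's algorithm) described below, starting from the critical loading. Then: (a) the procedure terminates, i.e. after finitely many moves the critical loading on the transient states recurs (whatever order is used for the available type 1 moves); (b) at termination, let $w_{uj}$ (for transient $j$) be the total number of chips moved out of state $j$ during the whole run (i.e. $r_j$ times the number of type 1 moves made at $j$), let $v_{uk}$ (for absorbing $k$) be the total number of chips moved into state $k$ during the run, and let $v_u=\sum_{k=r+1}^{s} v_{uk}$. Then $v_u>0$ and, for every transient state $j$ and every absorbing state $k$, \[ N_{uj}=\frac{w_{uj}}{v_u},\qquad B_{uk}=\frac{v_{uk}}{v_u}, \] where $N_{uj}$ is the expected number of visits (counting time $0$) to state $j$ for the chain started at $u$, and $B_{uk}$ is the probability that the chain started at $u$ is eventually absorbed in state $k$. Equivalently, writing $Q=(p_{ij})_{1\le i,j\le r}$ and $R=(p_{ik})_{1\le i\le r<k\le s}$, $N=(I-Q)^{-1}$ and $B=NR$.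
   Context: An absorbing Markov chain is a finite Markov chain in which absorbing states (states $j$ with $p_{jj}=1$) exist and from every state some absorbing state can be reached; the non-absorbing states are transient. Chip-moving procedure. A configuration is an assignment of a nonnegative integer number of chips to each state $1,\dots,s$. Two kinds of moves are allowed: - Type 1 move at a transient state $i$: allowed only if state $i$ holds at least $r_i$ chips; it removes $r_i$ chips from $i$ and sends $r_{ij}$ of them to state $j$ for each $j=1,\dots,s$. - Type 2 move: add one new chip to state $u$; allowed only when no type 1 move is possible. The critical loading (for $u$) is the configuration with $r_i-1$ chips on each transient state $i\ne u$, $r_u$ chips on $u$, and $0$ chips on every absorbing state. The procedure starts from the critical loading and repeats the following round: perform type 1 moves as long as any is possible; when none is possible, perform type 2 moves until state $u$ holds exactly $r_u$ chips; then, if the numbers of chips on the transient states $1,\dots,r$ coincide with the critical loading ($r_i-1$ on $i\ne u$, $r_u$ on $u$), stop; otherwise start another round. *)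

theory Defs
  imports Complex_Main
begin

text \<open>A chip state of the procedure is a triple (c, m, b): c j = chips on state j,
  m i = number of type 1 moves performed so far at state i,
  b = whether the most recent move was a type 2 move.\<close>

type_synonym chipstate = "(nat \<Rightarrow> nat) \<times> (nat \<Rightarrow> nat) \<times> bool"

fun matpow :: "nat \<Rightarrow> (nat \<Rightarrow> nat \<Rightarrow> real) \<Rightarrow> nat \<Rightarrow> nat \<Rightarrow> nat \<Rightarrow> real" where
  "matpow s P 0 i j = (if i = j then 1 else 0)"
| "matpow s P (Suc n) i j = (\<Sum>l=1..s. matpow s P n i l * P l j)"

definition edge :: "nat \<Rightarrow> (nat \<Rightarrow> nat \<Rightarrow> real) \<Rightarrow> (nat \<times> nat) set" where
  "edge s P = {(a, b). a \<in> {1..s} \<and> b \<in> {1..s} \<and> P a b > 0}"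

definition absorbing_chain :: "nat \<Rightarrow> nat \<Rightarrow> (nat \<Rightarrow> nat \<Rightarrow> real) \<Rightarrow> bool" where
  "absorbing_chain s r P \<longleftrightarrow>
     r \<le> s \<and>
     (\<forall>i\<in>{1..s}. \<forall>j\<in>{1..s}. 0 \<le> P i j) \<and>
     (\<forall>i\<in>{1..s}. (\<Sum>j=1..s. P i j) = 1) \<and>
     (\<forall>k\<in>{r+1..s}. P k k = 1) \<and>
     (\<forall>i\<in>{1..r}. P i i \<noteq> 1) \<and>
     (\<forall>i\<in>{1..s}. \<exists>k\<in>{r+1..s}. (i, k) \<in> (edge s P)\<^sup>*)"

definition critical_on_transient :: "nat \<Rightarrow> (nat \<Rightarrow> nat) \<Rightarrow> nat \<Rightarrow> (nat \<Rightarrow> nat) \<Rightarrow> bool" where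
  "critical_on_transient r rv u c \<longleftrightarrow>
     (\<forall>i\<in>{1..r}. c i = (if i = u then rv i else rv i - 1))"

definition critical_loading :: "nat \<Rightarrow> (nat \<Rightarrow> nat) \<Rightarrow> nat \<Rightarrow> nat \<Rightarrow> nat" where
  "critical_loading r rv u = (\<lambda>i. if i \<in> {1..r} then (if i = u then rv i else rv i - 1) else 0)"

definition init_state :: "nat \<Rightarrow> (nat \<Rightarrow> nat) \<Rightarrow> nat \<Rightarrow> chipstate" where
  "init_state r rv u = (critical_loading r rv u, \<lambda>_. 0, False)"

text \<open>The procedure stops right after a type 2 phase that restores the critical loading
  on the transient states (critical loading forces exactly r_u chips on u, i.e. the
  type 2 phase is complete).\<close>
definition stopped :: "nat \<Rightarrow> (nat \<Rightarrow> nat) \<Rightarrow> nat \<Rightarrow> chipstate \<Rightarrow> bool" where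
  "stopped r rv u \<sigma> \<longleftrightarrow> (case \<sigma> of (c, m, b) \<Rightarrow> b \<and> critical_on_transient r rv u c)"

definition move1 :: "nat \<Rightarrow> nat \<Rightarrow> (nat \<Rightarrow> nat) \<Rightarrow> (nat \<Rightarrow> nat \<Rightarrow> nat) \<Rightarrow> nat
                     \<Rightarrow> chipstate \<Rightarrow> chipstate \<Rightarrow> bool" where
  "move1 s r rv rm i \<sigma> \<sigma>' \<longleftrightarrow> (case \<sigma> of (c, m, b) \<Rightarrow>
     i \<in> {1..r} \<and> rv i \<le> c i \<and>
     \<sigma>' = ((\<lambda>j. c j - (if j = i then rv i else 0) + (if j \<in> {1..s} then rm i j else 0)),
           m(i := m i + 1), False))"

definition move2 :: "nat \<Rightarrow> (nat \<Rightarrow> nat) \<Rightarrow> nat \<Rightarrow> chipstate \<Rightarrow> chipstate \<Rightarrow> bool" where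
  "move2 r rv u \<sigma> \<sigma>' \<longleftrightarrow> (case \<sigma> of (c, m, b) \<Rightarrow>
     (\<forall>i\<in>{1..r}. c i < rv i) \<and> \<sigma>' = (c(u := c u + 1), m, True))"

definition engel_step :: "nat \<Rightarrow> nat \<Rightarrow> (nat \<Rightarrow> nat) \<Rightarrow> (nat \<Rightarrow> nat \<Rightarrow> nat) \<Rightarrow> nat
                          \<Rightarrow> chipstate \<Rightarrow> chipstate \<Rightarrow> bool" where
  "engel_step s r rv rm u \<sigma> \<sigma>' \<longleftrightarrow> \<not> stopped r rv u \<sigma> \<and>
     ((\<exists>i. move1 s r rv rm i \<sigma> \<sigma>') \<or> move2 r rv u \<sigma> \<sigma>')"

definition chips_into :: "nat \<Rightarrow> (nat \<Rightarrow> nat \<Rightarrow> nat) \<Rightarrow> (nat \<Rightarrow> nat) \<Rightarrow> nat \<Rightarrow> nat" where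
  "chips_into r rm m k = (\<Sum>i=1..r. m i * rm i k)"

end

theory Submission
  imports Defs
begin

locale engel =
  fixes s r u :: nat and P :: "nat \<Rightarrow> nat \<Rightarrow> real"
    and rv :: "nat \<Rightarrow> nat" and rm :: "nat \<Rightarrow> nat \<Rightarrow> nat"
  assumes chain: "absorbing_chain s r P"
    and rat: "\<forall>i\<in>{1..r}. 0 < rv i \<and> (\<forall>j\<in>{1..s}. P i j = real (rm i j) / real (rv i))"
    and u: "u \<in> {1..r}"
begin

lemma rs: "r \<le> s" using chain unfolding absorbing_chain_def by auto

lemma Pnn: "i \<in> {1..s} \<Longrightarrow> j \<in> {1..s} \<Longrightarrow> 0 \<le> P i j"
  using chain unfolding absorbing_chain_def by auto

lemma rowsum: "i \<in> {1..s} \<Longrightarrow> (\<Sum>j=1..s. P i j) = 1"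
  using chain unfolding absorbing_chain_def by auto

lemma rvpos: "i \<in> {1..r} \<Longrightarrow> 0 < rv i" using rat by auto

lemma Prat: "i \<in> {1..r} \<Longrightarrow> j \<in> {1..s} \<Longrightarrow> P i j = real (rm i j) / real (rv i)"
  using rat by auto

lemma split_s: "{1..s} = {1..r} \<union> {r+1..s}" using rs by auto

lemma sum_split: "(\<Sum>j=1..s. f j) = (\<Sum>j=1..r. f j) + (\<Sum>j=r+1..s. (f j :: 'a::comm_monoid_add))"
  unfolding split_s by (rule sum.union_disjoint) auto

lemma rm_sum: assumes i: "i \<in> {1..r}" shows "(\<Sum>j=1..s. rm i j) = rv i"
proof -
  have "i \<in> {1..s}" using i rs by auto
  then have "1 = (\<Sum>j=1..s. P i j)" using rowsum by auto
  also have "\<dots> = (\<Sum>j=1..s. real (rm i j) / real (rv i))"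
    using Prat[OF i] by (intro sum.cong) auto
  also have "\<dots> = real (\<Sum>j=1..s. rm i j) / real (rv i)"
    by (simp add: sum_divide_distrib)
  finally have "real (rv i) = real (\<Sum>j=1..s. rm i j)" using rvpos[OF i] by (simp add: field_simps)
  then show ?thesis by (metis of_nat_eq_iff)
qed

lemma P_abs: assumes k: "k \<in> {r+1..s}" and j: "j \<in> {1..s}" shows "P k j = (if j = k then 1 else 0)"
proof -
  have ks: "k \<in> {1..s}" using k by auto
  have Pkk: "P k k = 1" using chain k unfolding absorbing_chain_def by auto
  have "1 = (\<Sum>l\<in>{1..s}. P k l)" using rowsum[OF ks] by auto
  also have "\<dots> = P k k + (\<Sum>l\<in>{1..s}-{k}. P k l)"
    using ks by (simp add: sum.remove)
  finally have "(\<Sum>l\<in>{1..s}-{k}. P k l) = 0" using Pkk by simp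
  then have "\<forall>l\<in>{1..s}-{k}. P k l = 0"
    using Pnn ks by (subst sum_nonneg_eq_0_iff[symmetric]) auto
  then show ?thesis using j Pkk by auto
qed

lemma sumT_le: assumes k: "k \<in> {1..r}" shows "(\<Sum>j=1..r. P k j) \<le> 1"
proof -
  have ks: "k \<in> {1..s}" using k rs by auto
  have "0 \<le> (\<Sum>j=r+1..s. P k j)" using Pnn ks by (intro sum_nonneg) auto
  then show ?thesis using rowsum[OF ks] sum_split[of "P k"] by linarith
qed

lemma noclosed:
  assumes nn: "\<forall>j\<in>{1..r}. 0 \<le> y j"
    and le: "\<forall>j\<in>{1..r}. y j \<le> (\<Sum>k=1..r. y k * P k j)"
  shows "\<forall>j\<in>{1..r}. y j = 0"
proof (rule ccontr)
  define T where "T = {1..r}"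
  assume "\<not> (\<forall>j\<in>{1..r}. y j = 0)"
  then obtain k0 where k0: "k0 \<in> T" "y k0 \<noteq> 0" unfolding T_def by auto
  have h0: "(\<Sum>j\<in>T. y j) \<le> (\<Sum>j\<in>T. \<Sum>k\<in>T. y k * P k j)"
    using le unfolding T_def by (intro sum_mono) auto
  have h2: "(\<Sum>j\<in>T. \<Sum>k\<in>T. y k * P k j) = (\<Sum>k\<in>T. y k * (\<Sum>j\<in>T. P k j))"
    by (subst sum.swap) (simp add: sum_distrib_left)
  have h3: "(\<Sum>k\<in>T. y k * (\<Sum>j\<in>T. P k j)) \<le> (\<Sum>k\<in>T. y k)"
    using nn sumT_le unfolding T_def
    by (intro sum_mono) (simp add: mult_left_le)
  have h1: "(\<Sum>j\<in>T. y j) \<le> (\<Sum>k\<in>T. y k * (\<Sum>j\<in>T. P k j))" using h0 h2 by linarith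
  have "(\<Sum>j\<in>T. ((\<Sum>k\<in>T. y k * P k j) - y j)) = (\<Sum>j\<in>T. \<Sum>k\<in>T. y k * P k j) - (\<Sum>j\<in>T. y j)"
    by (simp add: sum_subtractf)
  also have "\<dots> \<le> 0" using h2 h3 by linarith
  finally have "(\<Sum>j\<in>T. ((\<Sum>k\<in>T. y k * P k j) - y j)) = 0"
    using le unfolding T_def by (intro antisym sum_nonneg) auto
  then have eqj: "\<forall>j\<in>T. y j = (\<Sum>k\<in>T. y k * P k j)"
    using le unfolding T_def by (subst (asm) sum_nonneg_eq_0_iff) auto
  have "(\<Sum>k\<in>T. y k * (1 - (\<Sum>j\<in>T. P k j))) = (\<Sum>k\<in>T. y k) - (\<Sum>k\<in>T. y k * (\<Sum>j\<in>T. P k j))"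
    by (simp add: sum_subtractf algebra_simps)
  also have "\<dots> \<le> 0" using h1 by linarith
  finally have "(\<Sum>k\<in>T. y k * (1 - (\<Sum>j\<in>T. P k j))) = 0"
    using nn sumT_le unfolding T_def by (intro antisym sum_nonneg) auto
  then have eqk: "\<forall>k\<in>T. y k * (1 - (\<Sum>j\<in>T. P k j)) = 0"
    using nn sumT_le unfolding T_def by (subst (asm) sum_nonneg_eq_0_iff) auto
  define S where "S = {k\<in>T. 0 < y k}"
  have closed: "j \<in> S" if "k \<in> S" "(k, j) \<in> edge s P" for k j
  proof -
    have kT: "k \<in> T" and yk: "0 < y k" using that S_def by auto
    have ks: "k \<in> {1..s}" using kT rs T_def by auto
    have js: "j \<in> {1..s}" and Pkj: "0 < P k j" using that(2) unfolding edge_def by auto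
    have "(\<Sum>j\<in>T. P k j) = 1" using eqk kT yk by auto
    then have "(\<Sum>j=r+1..s. P k j) = 0" using rowsum[OF ks] sum_split[of "P k"] unfolding T_def by linarith
    then have "\<forall>j\<in>{r+1..s}. P k j = 0" using Pnn ks by (subst (asm) sum_nonneg_eq_0_iff) auto
    then have jT: "j \<in> T" using js Pkj T_def by auto
    have "y k * P k j \<le> (\<Sum>l\<in>T. y l * P l j)"
      using kT nn Pnn js rs T_def by (intro member_le_sum) (auto intro!: mult_nonneg_nonneg)
    then have "0 < y j" using eqj jT yk Pkj by (metis mult_pos_pos order_less_le_trans)
    then show ?thesis using jT S_def by auto
  qed
  have reach: "j \<in> S" if "(k, j) \<in> (edge s P)\<^sup>*" "k \<in> S" for k j
    using that by (induction rule: rtrancl_induct) (auto intro: closed)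
  have "k0 \<in> S" using k0 nn S_def T_def by force
  moreover have "k0 \<in> {1..s}" using k0 rs T_def by auto
  then obtain kk where "kk \<in> {r+1..s}" "(k0, kk) \<in> (edge s P)\<^sup>*"
    using chain unfolding absorbing_chain_def by blast
  ultimately show False using reach S_def T_def by force
qed


lemma noclosed_int:
  assumes le: "\<forall>j\<in>{1..r}. int (rv j) * int (y j) \<le> (\<Sum>k=1..r. int (y k) * int (rm k j))"
  shows "\<forall>j\<in>{1..r}. y j = 0"
proof -
  define Y where "Y j = real (rv j) * real (y j)" for j
  have "\<forall>j\<in>{1..r}. Y j = 0"
  proof (rule noclosed)
    show "\<forall>j\<in>{1..r}. 0 \<le> Y j" unfolding Y_def by auto
    show "\<forall>j\<in>{1..r}. Y j \<le> (\<Sum>k=1..r. Y k * P k j)"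
    proof
      fix j assume j: "j \<in> {1..r}"
      have js: "j \<in> {1..s}" using j rs by auto
      have "real_of_int (int (rv j) * int (y j)) \<le> real_of_int (\<Sum>k=1..r. int (y k) * int (rm k j))"
        using le j by (simp only: of_int_le_iff)
      then have "Y j \<le> (\<Sum>k=1..r. real (y k) * real (rm k j))" unfolding Y_def by simp
      also have "\<dots> = (\<Sum>k=1..r. Y k * P k j)"
        unfolding Y_def
      proof (intro sum.cong refl)
        fix k assume k: "k \<in> {1..r}"
        then have "0 < rv k" by (rule rvpos)
        then show "real (y k) * real (rm k j) = real (rv k) * real (y k) * P k j"
          using Prat[OF k js] by (simp add: field_simps)
      qed
      finally show "Y j \<le> (\<Sum>k=1..r. Y k * P k j)" .
    qed
  qed
  then show ?thesis unfolding Y_def using rvpos by (metis mult_eq_0_iff of_nat_0_eq_iff less_irrefl)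
qed

definition c0 :: "nat \<Rightarrow> nat" where "c0 = critical_loading r rv u"

lemma c0_T: assumes j: "j \<in> {1..r}" shows "int (c0 j) = (if j = u then int (rv j) else int (rv j) - 1)"
proof -
  have "Suc 0 \<le> rv j" using rvpos[OF j] by simp
  then show ?thesis using j unfolding c0_def critical_loading_def by (auto simp: of_nat_diff)
qed

definition Dv :: "chipstate \<Rightarrow> nat \<Rightarrow> int" where
  "Dv \<sigma> j = (case \<sigma> of (c,m,b) \<Rightarrow> int (c j) + int (rv j) * int (m j) - (\<Sum>k=1..r. int (m k) * int (rm k j)))"

definition A :: "chipstate \<Rightarrow> int" where "A \<sigma> = Dv \<sigma> u - int (rv u)"

definition Inv :: "chipstate \<Rightarrow> bool" where
  "Inv \<sigma> = (case \<sigma> of (c,m,b) \<Rightarrow> (\<forall>j\<in>{1..r}. Dv \<sigma> j = int (c0 j) + (if j = u then A \<sigma> else 0))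
      \<and> 0 \<le> A \<sigma> \<and> (b \<longrightarrow> 1 \<le> A \<sigma>) \<and> (\<Sum>j=1..r. c j) \<le> (\<Sum>j=1..r. rv j))"

definition cnt :: "chipstate \<Rightarrow> int" where "cnt \<sigma> = A \<sigma> + (\<Sum>i=1..r. int (fst (snd \<sigma>) i))"

lemma sum_upd: "i \<in> {1..r} \<Longrightarrow>
   (\<Sum>k=1..r. int ((m(i:=m i+1)) k) * z k) = (\<Sum>k=1..r. int (m k) * z k) + (z i :: int)"
proof -
  assume i: "i \<in> {1..r}"
  have "(\<Sum>k=1..r. int ((m(i:=m i+1)) k) * z k) = (\<Sum>k=1..r. int (m k) * z k + (if k = i then z k else 0))"
    by (intro sum.cong) (auto simp: algebra_simps)
  also have "\<dots> = (\<Sum>k=1..r. int (m k) * z k) + z i" using i by (simp add: sum.distrib)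
  finally show ?thesis .
qed

lemma move1_facts:
  assumes "move1 s r rv rm i (c,m,b) \<sigma>'"
  shows "\<exists>c'. \<sigma>' = (c', m(i:=m i+1), False) \<and> i \<in> {1..r} \<and> rv i \<le> c i \<and>
     (\<forall>j\<in>{1..r}. int (c' j) = int (c j) - (if j = i then int (rv i) else 0) + int (rm i j))"
  using assms rs unfolding move1_def by (auto simp: of_nat_diff)

lemma move1_D:
  assumes "move1 s r rv rm i (c,m,b) \<sigma>'" "j \<in> {1..r}"
  shows "Dv \<sigma>' j = Dv (c,m,b) j"
proof -
  obtain c' where c': "\<sigma>' = (c', m(i:=m i+1), False)" "i \<in> {1..r}" "rv i \<le> c i"
     "\<forall>j\<in>{1..r}. int (c' j) = int (c j) - (if j = i then int (rv i) else 0) + int (rm i j)"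
    using move1_facts[OF assms(1)] by blast
  have cj: "int (c' j) = int (c j) - (if j = i then int (rv i) else 0) + int (rm i j)"
    using c'(4) assms(2) by blast
  show ?thesis unfolding c'(1) Dv_def using cj sum_upd[OF c'(2), of m "\<lambda>k. int (rm k j)"]
    by (cases "j = i") (auto simp: algebra_simps)
qed

lemma move2_facts:
  assumes "move2 r rv u (c,m,b) \<sigma>'"
  shows "\<sigma>' = (c(u := c u + 1), m, True) \<and> (\<forall>i\<in>{1..r}. c i < rv i)"
  using assms unfolding move2_def by auto

lemma move2_D:
  assumes "move2 r rv u (c,m,b) \<sigma>'" "j \<in> {1..r}"
  shows "Dv \<sigma>' j = Dv (c,m,b) j + (if j = u then 1 else 0)"
  using move2_facts[OF assms(1)] unfolding Dv_def by auto


lemma A_move1: "move1 s r rv rm i (c,m,b) \<sigma>' \<Longrightarrow> A \<sigma>' = A (c,m,b)"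
  unfolding A_def using move1_D u by auto

lemma A_move2: "move2 r rv u (c,m,b) \<sigma>' \<Longrightarrow> A \<sigma>' = A (c,m,b) + 1"
  unfolding A_def using move2_D u by auto

lemma rmT_le: assumes i: "i \<in> {1..r}" shows "(\<Sum>j=1..r. rm i j) \<le> rv i"
  using rm_sum[OF i] sum_split[of "rm i"] by linarith

lemma Inv_init: "Inv (init_state r rv u)"
proof -
  have D: "Dv (init_state r rv u) j = int (c0 j)" for j
    unfolding Dv_def init_state_def c0_def by simp
  have A0: "A (init_state r rv u) = 0" unfolding A_def D using c0_T[OF u] by simp
  have "(\<Sum>j=1..r. c0 j) \<le> (\<Sum>j=1..r. rv j)"
    by (intro sum_mono) (auto simp: c0_def critical_loading_def)
  then show ?thesis unfolding Inv_def using D A0 c0_T u by (auto simp: init_state_def c0_def)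
qed

lemma Inv_step:
  assumes I: "Inv \<sigma>" and st: "engel_step s r rv rm u \<sigma> \<sigma>'"
  shows "Inv \<sigma>'"
proof -
  obtain c m b where \<sigma>: "\<sigma> = (c,m,b)" by (cases \<sigma>) auto
  have I1: "\<forall>j\<in>{1..r}. Dv \<sigma> j = int (c0 j) + (if j = u then A \<sigma> else 0)"
    and I2: "0 \<le> A \<sigma>" and I3: "b \<longrightarrow> 1 \<le> A \<sigma>" and I4: "(\<Sum>j=1..r. c j) \<le> (\<Sum>j=1..r. rv j)"
    using I unfolding Inv_def \<sigma> by auto
  from st consider (m1) i where "move1 s r rv rm i (c,m,b) \<sigma>'" | (m2) "move2 r rv u (c,m,b) \<sigma>'"
    unfolding engel_step_def \<sigma> by blast
  then show ?thesis
  proof cases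
    case m1
    obtain c' where c': "\<sigma>' = (c', m(i:=m i+1), False)" "i \<in> {1..r}" "rv i \<le> c i"
       "\<forall>j\<in>{1..r}. int (c' j) = int (c j) - (if j = i then int (rv i) else 0) + int (rm i j)"
      using move1_facts[OF m1] by blast
    have "(\<Sum>j=1..r. int (c' j)) = (\<Sum>j=1..r. int (c j) - (if j = i then int (rv i) else 0) + int (rm i j))"
      using c'(4) by (intro sum.cong) auto
    also have "\<dots> = (\<Sum>j=1..r. int (c j)) - int (rv i) + int (\<Sum>j=1..r. rm i j)"
      using c'(2) by (simp add: sum.distrib sum_subtractf)
    also have "\<dots> \<le> (\<Sum>j=1..r. int (c j))" using rmT_le[OF c'(2)] by linarith
    finally have "int (\<Sum>j=1..r. c' j) \<le> int (\<Sum>j=1..r. c j)" by simp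
    then have S: "(\<Sum>j=1..r. c' j) \<le> (\<Sum>j=1..r. rv j)" using I4 by linarith
    show ?thesis unfolding Inv_def c'(1) using I1 I2 S move1_D[OF m1] A_move1[OF m1]
      unfolding \<sigma> c'(1) by auto
  next
    case m2
    have \<sigma>': "\<sigma>' = (c(u := c u + 1), m, True)" and lt: "\<forall>i\<in>{1..r}. c i < rv i"
      using move2_facts[OF m2] by auto
    have "(\<Sum>j=1..r. int ((c(u := c u + 1)) j)) = (\<Sum>j=1..r. int (c j) + (if j = u then 1 else 0))"
      by (intro sum.cong) auto
    also have "\<dots> = (\<Sum>j=1..r. int (c j)) + 1" using u by (simp add: sum.distrib)
    also have "\<dots> \<le> (\<Sum>j=1..r. int (rv j) - 1) + 1"
      using lt by (intro add_right_mono sum_mono) (auto simp: int_ops less_Suc_eq_le)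
    also have "\<dots> = (\<Sum>j=1..r. int (rv j)) - int r + 1" by (simp add: sum_subtractf)
    also have "\<dots> \<le> (\<Sum>j=1..r. int (rv j))" using u by auto
    finally have S: "(\<Sum>j=1..r. (c(u := c u + 1)) j) \<le> (\<Sum>j=1..r. rv j)" by (simp only: of_nat_sum[symmetric] of_nat_le_iff)
    show ?thesis unfolding Inv_def \<sigma>' using I1 I2 S move2_D[OF m2] A_move2[OF m2]
      unfolding \<sigma> \<sigma>' by auto
  qed
qed

lemma cnt_step:
  assumes st: "engel_step s r rv rm u \<sigma> \<sigma>'"
  shows "cnt \<sigma>' = cnt \<sigma> + 1 \<and> A \<sigma> \<le> A \<sigma>' \<and> fst (snd \<sigma>) \<le> fst (snd \<sigma>')"
proof -
  obtain c m b where \<sigma>: "\<sigma> = (c,m,b)" by (cases \<sigma>) auto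
  from st consider (m1) i where "move1 s r rv rm i (c,m,b) \<sigma>'" | (m2) "move2 r rv u (c,m,b) \<sigma>'"
    unfolding engel_step_def \<sigma> by blast
  then show ?thesis
  proof cases
    case m1
    obtain c' where c': "\<sigma>' = (c', m(i:=m i+1), False)" "i \<in> {1..r}"
      using move1_facts[OF m1] by blast
    show ?thesis using A_move1[OF m1] sum_upd[OF c'(2), of m "\<lambda>_. 1"] unfolding cnt_def \<sigma> c'(1)
      by (auto simp: le_fun_def)
  next
    case m2
    show ?thesis using A_move2[OF m2] move2_facts[OF m2] unfolding cnt_def \<sigma> by auto
  qed
qed

lemma not_stuck: "\<not> stopped r rv u \<sigma> \<Longrightarrow> \<exists>\<sigma>'. engel_step s r rv rm u \<sigma> \<sigma>'"
proof -
  assume ns: "\<not> stopped r rv u \<sigma>"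
  obtain c m b where \<sigma>: "\<sigma> = (c,m,b)" by (cases \<sigma>) auto
  show ?thesis
  proof (cases "\<exists>i\<in>{1..r}. rv i \<le> c i")
    case True
    then obtain i where i: "i \<in> {1..r}" "rv i \<le> c i" by blast
    have "move1 s r rv rm i \<sigma> ((\<lambda>j. c j - (if j = i then rv i else 0) + (if j \<in> {1..s} then rm i j else 0)),
           m(i := m i + 1), False)" unfolding move1_def \<sigma> using i by auto
    then show ?thesis using ns unfolding engel_step_def by blast
  next
    case False
    then have "move2 r rv u \<sigma> (c(u := c u + 1), m, True)" unfolding move2_def \<sigma> by auto
    then show ?thesis using ns unfolding engel_step_def by blast
  qed
qed


lemma Inv_eq:
  assumes "Inv (c,m,b)" "j \<in> {1..r}"
  shows "int (c j) = int (c0 j) + (if j = u then A (c,m,b) else 0) - int (rv j) * int (m j)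
           + (\<Sum>k=1..r. int (m k) * int (rm k j))"
  using assms unfolding Inv_def Dv_def by (auto simp: algebra_simps)

lemma Inv_A: "Inv (c,m,b) \<Longrightarrow> 0 \<le> A (c,m,b) \<and> (b \<longrightarrow> 1 \<le> A (c,m,b))"
  unfolding Inv_def by auto

lemma Inv_sum: "Inv (c,m,b) \<Longrightarrow> (\<Sum>j=1..r. c j) \<le> (\<Sum>j=1..r. rv j)"
  unfolding Inv_def by auto

lemma Inv_eq':
  assumes "Inv \<sigma>" "j \<in> {1..r}"
  shows "int (fst \<sigma> j) = int (c0 j) + (if j = u then A \<sigma> else 0) - int (rv j) * int (fst (snd \<sigma>) j)
           + (\<Sum>k=1..r. int (fst (snd \<sigma>) k) * int (rm k j))"
  using Inv_eq[of "fst \<sigma>" "fst (snd \<sigma>)" "snd (snd \<sigma>)" j] assms by simp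

lemma Inv_sum': "Inv \<sigma> \<Longrightarrow> (\<Sum>j=1..r. fst \<sigma> j) \<le> (\<Sum>j=1..r. rv j)"
  using Inv_sum[of "fst \<sigma>" "fst (snd \<sigma>)" "snd (snd \<sigma>)"] by simp

lemma no_infinite:
  "\<not> (\<exists>f. f 0 = init_state r rv u \<and> (\<forall>n. engel_step s r rv rm u (f n) (f (Suc n))))"
proof
  assume "\<exists>f. f 0 = init_state r rv u \<and> (\<forall>n. engel_step s r rv rm u (f n) (f (Suc n)))"
  then obtain f where f0: "f 0 = init_state r rv u" and fs: "\<And>n. engel_step s r rv rm u (f n) (f (Suc n))"
    by blast
  define C where "C n = fst (f n)" for n
  define M where "M n = fst (snd (f n))" for n
  define Aa where "Aa n = A (f n)" for n
  have fn: "f n = (C n, M n, snd (snd (f n)))" for n unfolding C_def M_def by simp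
  have I: "Inv (f n)" for n
    by (induction n) (auto simp: f0 Inv_init intro: Inv_step[OF _ fs])
  have cnt_n: "cnt (f n) = int n" for n
  proof (induction n)
    case 0
    have "A (init_state r rv u) = 0" unfolding A_def Dv_def init_state_def
      using c0_T[OF u] by (simp add: c0_def)
    then show ?case unfolding f0 cnt_def by (simp add: init_state_def)
  next
    case (Suc n) then show ?case using cnt_step[OF fs[of n]] by simp
  qed
  have cntM: "cnt (f n) = Aa n + (\<Sum>i=1..r. int (M n i))" for n unfolding cnt_def Aa_def M_def by simp
  have AS1: "Aa n \<le> Aa (Suc n)" for n using cnt_step[OF fs[of n]] unfolding Aa_def by simp
  have MS1: "M n \<le> M (Suc n)" for n using cnt_step[OF fs[of n]] unfolding M_def by simp
  have Amono: "Aa n \<le> Aa n'" if "n \<le> n'" for n n'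
    by (rule lift_Suc_mono_le[of Aa, OF AS1 that])
  have Mmono: "M n \<le> M n'" if "n \<le> n'" for n n'
    by (rule lift_Suc_mono_le[of M, OF MS1 that])
  define B where "B = (\<Sum>j=1..r. rv j)"
  have Cb: "C n j \<le> B" if "j \<in> {1..r}" for n j
  proof -
    have "C n j \<le> (\<Sum>j=1..r. C n j)" using that by (intro member_le_sum) auto
    also have "\<dots> \<le> B" using Inv_sum'[OF I[of n]] unfolding B_def C_def .
    finally show ?thesis .
  qed
  define h where "h n = map (C n) [1..<Suc r]" for n
  have "range h \<subseteq> {xs. set xs \<subseteq> {0..B} \<and> length xs = r}" unfolding h_def using Cb by auto
  moreover have "finite {xs. set xs \<subseteq> {0..B} \<and> length xs = r}" by (rule finite_lists_length_eq) auto
  ultimately have "finite (range h)" by (rule finite_subset)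
  then have "\<not> inj h" using finite_imageD[of h UNIV] infinite_UNIV_nat by blast
  then obtain p0 q0 where "p0 \<noteq> q0" "h p0 = h q0" unfolding inj_def by blast
  then obtain p q where pq: "p < q" "h p = h q"
    by (metis linorder_neqE_nat)
  have Ceq: "C p j = C q j" if "j \<in> {1..r}" for j
  proof -
    have "\<forall>x\<in>set [1..<Suc r]. C p x = C q x" using pq(2) unfolding h_def map_eq_conv by blast
    moreover have "j \<in> set [1..<Suc r]" using that by auto
    ultimately show ?thesis by blast
  qed
  define t where "t = Aa q - Aa p"
  define x where "x k = M q k - M p k" for k
  have Mpq: "M p k \<le> M q k" for k using Mmono[of p q] pq by (auto simp: le_fun_def)
  have xi: "int (x k) = int (M q k) - int (M p k)" for k unfolding x_def using Mpq[of k] by (simp add: of_nat_diff)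
  have t0: "0 \<le> t" unfolding t_def using Amono[of p q] pq by simp
  have F1: "int (rv j) * int (x j) - (\<Sum>k=1..r. int (x k) * int (rm k j)) = (if j = u then t else 0)"
    if j: "j \<in> {1..r}" for j
  proof -
    have ep: "int (C p j) = int (c0 j) + (if j = u then Aa p else 0) - int (rv j) * int (M p j)
           + (\<Sum>k=1..r. int (M p k) * int (rm k j))"
      using Inv_eq'[OF I[of p] j] unfolding Aa_def C_def M_def .
    have eq: "int (C q j) = int (c0 j) + (if j = u then Aa q else 0) - int (rv j) * int (M q j)
           + (\<Sum>k=1..r. int (M q k) * int (rm k j))"
      using Inv_eq'[OF I[of q] j] unfolding Aa_def C_def M_def .
    have "(\<Sum>k=1..r. int (x k) * int (rm k j)) = (\<Sum>k=1..r. int (M q k) * int (rm k j)) - (\<Sum>k=1..r. int (M p k) * int (rm k j))"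
      unfolding xi by (simp add: sum_subtractf algebra_simps)
    then show ?thesis using ep eq Ceq[OF j] unfolding xi t_def by (auto simp: algebra_simps)
  qed
  have t1: "1 \<le> t"
  proof (rule ccontr)
    assume "\<not> 1 \<le> t"
    then have tz: "t = 0" using t0 by simp
    have "\<forall>j\<in>{1..r}. x j = 0"
      by (rule noclosed_int) (use F1 tz in auto)
    then have "cnt (f q) - cnt (f p) = 0" unfolding cntM t_def[symmetric]
      using tz by (simp add: sum_subtractf[symmetric] xi[symmetric] t_def)
    then show False using cnt_n pq by simp
  qed
  have key: "Aa n \<le> t \<and> (\<forall>i\<in>{1..r}. M n i \<le> x i) \<and> (Aa n = t \<longrightarrow> stopped r rv u (f n))" for n
  proof (induction n)
    case 0
    have "Aa 0 = 0" unfolding Aa_def A_def Dv_def f0 init_state_def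
      using c0_T[OF u] by (simp add: c0_def)
    moreover have "M 0 = (\<lambda>_. 0)" unfolding M_def f0 init_state_def by simp
    ultimately show ?case using t1 by auto
  next
    case (Suc n)
    have ns: "\<not> stopped r rv u (f n)" using fs[of n] unfolding engel_step_def by blast
    then have lt: "Aa n < t" using Suc.IH by force
    have Mle: "\<forall>i\<in>{1..r}. M n i \<le> x i" using Suc.IH by blast
    obtain b where fnb: "f n = (C n, M n, b)" using fn by blast
    have ceq: "int (C n j) = int (c0 j) + (if j = u then Aa n else 0) - int (rv j) * int (M n j)
           + (\<Sum>k=1..r. int (M n k) * int (rm k j))" if "j \<in> {1..r}" for j
      using Inv_eq'[OF I[of n] that] unfolding Aa_def C_def M_def .
    from fs[of n] consider (m1) i where "move1 s r rv rm i (C n, M n, b) (f (Suc n))"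
      | (m2) "move2 r rv u (C n, M n, b) (f (Suc n))"
      unfolding engel_step_def fnb by blast
    then show ?case
    proof cases
      case m1
      obtain c' where c': "f (Suc n) = (c', (M n)(i:=M n i+1), False)" "i \<in> {1..r}" "rv i \<le> C n i"
        using move1_facts[OF m1] by blast
      have AS: "Aa (Suc n) = Aa n" using A_move1[OF m1] fnb unfolding Aa_def by simp
      have MS: "M (Suc n) = (M n)(i:=M n i+1)" unfolding M_def c'(1) by simp
      have "M n i < x i"
      proof (rule ccontr)
        assume "\<not> M n i < x i"
        then have Mi: "M n i = x i" using Mle c'(2) by force
        have "(\<Sum>k=1..r. int (M n k) * int (rm k i)) \<le> (\<Sum>k=1..r. int (x k) * int (rm k i))"
          using Mle by (intro sum_mono mult_right_mono) auto
        then have "int (C n i) \<le> int (c0 i) + (if i = u then Aa n - t else 0)"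
          using ceq[OF c'(2)] F1[OF c'(2)] Mi by (auto simp: algebra_simps)
        then have "int (C n i) < int (rv i)" using c0_T[OF c'(2)] lt by (auto split: if_splits)
        then show False using c'(3) by simp
      qed
      then show "Aa (Suc n) \<le> t \<and> (\<forall>i\<in>{1..r}. M (Suc n) i \<le> x i) \<and> (Aa (Suc n) = t \<longrightarrow> stopped r rv u (f (Suc n)))" using AS MS lt Mle by auto
    next
      case m2
      have fS: "f (Suc n) = ((C n)(u := C n u + 1), M n, True)" and clt: "\<forall>i\<in>{1..r}. C n i < rv i"
        using move2_facts[OF m2] by auto
      have AS: "Aa (Suc n) = Aa n + 1" using A_move2[OF m2] fnb unfolding Aa_def by simp
      have MS: "M (Suc n) = M n" unfolding M_def fS by simp
      have "stopped r rv u (f (Suc n))" if At: "Aa n + 1 = t"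
      proof -
        define y where "y k = x k - M n k" for k
        have yi: "int (y k) = int (x k) - int (M n k)" if "k \<in> {1..r}" for k
          unfolding y_def using Mle that by (simp add: of_nat_diff)
        have ysum: "(\<Sum>k=1..r. int (y k) * int (rm k j)) = (\<Sum>k=1..r. int (x k) * int (rm k j)) - (\<Sum>k=1..r. int (M n k) * int (rm k j))" for j
        proof -
          have "(\<Sum>k=1..r. int (y k) * int (rm k j)) = (\<Sum>k=1..r. int (x k) * int (rm k j) - int (M n k) * int (rm k j))"
            using yi by (intro sum.cong) (auto simp: left_diff_distrib)
          then show ?thesis by (simp add: sum_subtractf)
        qed
        have yeq: "int (rv j) * int (y j) - (\<Sum>k=1..r. int (y k) * int (rm k j)) = int (C n j) - int (c0 j) + (if j = u then 1 else 0)"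
          if j: "j \<in> {1..r}" for j
        proof -
          have "int (rv j) * int (y j) = int (rv j) * int (x j) - int (rv j) * int (M n j)"
            using yi[OF j] by (simp add: right_diff_distrib)
          then show ?thesis using ceq[OF j] F1[OF j] ysum[of j] At by (auto split: if_splits)
        qed
        have "\<forall>j\<in>{1..r}. y j = 0"
        proof (rule noclosed_int, intro ballI)
          fix j assume j: "j \<in> {1..r}"
          have "int (C n j) < int (rv j)" using clt j by auto
          then show "int (rv j) * int (y j) \<le> (\<Sum>k=1..r. int (y k) * int (rm k j))"
            using yeq[OF j] c0_T[OF j] by (auto split: if_splits)
        qed
        then have Mx: "\<forall>j\<in>{1..r}. M n j = x j" using Mle unfolding y_def by force
        have "int (((C n)(u := C n u + 1)) j) = int (c0 j)" if j: "j \<in> {1..r}" for j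
        proof -
          have "(\<Sum>k=1..r. int (M n k) * int (rm k j)) = (\<Sum>k=1..r. int (x k) * int (rm k j))"
            using Mx by (intro sum.cong) auto
          then show ?thesis using ceq[OF j] F1[OF j] Mx j At by (auto simp: algebra_simps)
        qed
        then have "\<forall>j\<in>{1..r}. ((C n)(u := C n u + 1)) j = c0 j" by (metis of_nat_eq_iff)
        then show ?thesis unfolding fS stopped_def critical_on_transient_def c0_def critical_loading_def
          by auto
      qed
      then show "Aa (Suc n) \<le> t \<and> (\<forall>i\<in>{1..r}. M (Suc n) i \<le> x i) \<and> (Aa (Suc n) = t \<longrightarrow> stopped r rv u (f (Suc n)))" using AS MS lt Mle by auto
    qed
  qed
  define n0 where "n0 = nat t + (\<Sum>i=1..r. x i) + 1"
  have "cnt (f n0) = Aa n0 + (\<Sum>i=1..r. int (M n0 i))" by (rule cntM)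
  also have "\<dots> \<le> t + (\<Sum>i=1..r. int (x i))" using key[of n0] by (intro add_mono sum_mono) auto
  also have "\<dots> < int n0" unfolding n0_def using t0 by simp
  finally show False using cnt_n by simp
qed


lemma prob:
  assumes wnn: "\<forall>j\<in>{1..r}. 0 \<le> w j"
    and weq: "\<forall>j\<in>{1..r}. w j = (if j = u then 1 else 0) + (\<Sum>k=1..r. w k * P k j)"
  shows "(\<forall>j\<in>{1..r}. (\<lambda>n. matpow s P n u j) sums w j) \<and>
         (\<forall>k\<in>{r+1..s}. (\<lambda>n. matpow s P n u k) \<longlonglongrightarrow> (\<Sum>l=1..r. w l * P l k))"
proof -
  define q where "q n j = matpow s P n u j" for n j
  have Q1: "q (Suc n) j = (\<Sum>l=1..r. q n l * P l j)" if j: "j \<in> {1..r}" for n j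
  proof -
    have js: "j \<in> {1..s}" using j rs by auto
    have "(\<Sum>l=r+1..s. q n l * P l j) = 0"
      using P_abs[OF _ js] j by (intro sum.neutral) auto
    moreover have "q (Suc n) j = (\<Sum>l=1..r. q n l * P l j) + (\<Sum>l=r+1..s. q n l * P l j)"
      unfolding q_def matpow.simps by (rule sum_split)
    ultimately show ?thesis by simp
  qed
  have Q2: "q (Suc n) k = q n k + (\<Sum>l=1..r. q n l * P l k)" if k: "k \<in> {r+1..s}" for n k
  proof -
    have ks: "k \<in> {1..s}" using k by auto
    have "(\<Sum>l=r+1..s. q n l * P l k) = (\<Sum>l=r+1..s. if l = k then q n k else 0)"
      using P_abs[OF _ ks] by (intro sum.cong) auto
    also have "\<dots> = q n k" using k by (simp add: sum.delta)
    moreover have "q (Suc n) k = (\<Sum>l=1..r. q n l * P l k) + (\<Sum>l=r+1..s. q n l * P l k)"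
      unfolding q_def matpow.simps by (rule sum_split)
    ultimately show ?thesis by simp
  qed
  have Q0: "q 0 j = (if j = u then 1 else 0)" for j unfolding q_def by auto
  have qnn: "0 \<le> q n j" if "j \<in> {1..s}" for n j
    using that
  proof (induction n arbitrary: j)
    case 0 then show ?case by (simp add: Q0)
  next
    case (Suc n) then show ?case unfolding q_def
      by (auto intro!: sum_nonneg mult_nonneg_nonneg Pnn simp: q_def[symmetric])
  qed
  define S where "S N j = (\<Sum>n<N. q n j)" for N j
  define z where "z N j = w j - S N j" for N j
  have Z1: "z (Suc N) j = (\<Sum>k=1..r. z N k * P k j)" if j: "j \<in> {1..r}" for N j
  proof -
    have "(\<Sum>k=1..r. S N k * P k j) = (\<Sum>n<N. \<Sum>k=1..r. q n k * P k j)"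
      unfolding S_def by (simp add: sum_distrib_right) (rule sum.swap)
    also have "\<dots> = (\<Sum>n<N. q (Suc n) j)" using Q1[OF j] by simp
    also have "\<dots> = S (Suc N) j - q 0 j" unfolding S_def by (simp only: sum.lessThan_Suc_shift)
    finally have e: "(\<Sum>k=1..r. S N k * P k j) = S (Suc N) j - q 0 j" .
    have "(\<Sum>k=1..r. z N k * P k j) = (\<Sum>k=1..r. w k * P k j) - (\<Sum>k=1..r. S N k * P k j)"
      unfolding z_def by (simp add: left_diff_distrib sum_subtractf)
    also have "\<dots> = z (Suc N) j" using e weq j Q0[of j] unfolding z_def by auto
    finally show ?thesis by simp
  qed
  have Z2: "0 \<le> z N j" if "j \<in> {1..r}" for N j
    using that
  proof (induction N arbitrary: j)
    case 0 then show ?case using wnn unfolding z_def S_def by auto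
  next
    case (Suc N)
    have "0 \<le> (\<Sum>k=1..r. z N k * P k j)"
      using Suc rs by (intro sum_nonneg mult_nonneg_nonneg Pnn) auto
    then show ?case using Z1[OF Suc.prems] by simp
  qed
  have dec: "decseq (\<lambda>N. z N j)" if j: "j \<in> {1..r}" for j
  proof (rule decseq_SucI)
    fix N
    have "0 \<le> q N j" using j rs by (intro qnn) auto
    then show "z (Suc N) j \<le> z N j" unfolding z_def S_def by simp
  qed
  define L where "L j = lim (\<lambda>N. z N j)" for j
  have zL: "(\<lambda>N. z N j) \<longlonglongrightarrow> L j" if j: "j \<in> {1..r}" for j
  proof -
    obtain LL where "(\<lambda>N. z N j) \<longlonglongrightarrow> LL"
      using decseq_convergent[OF dec[OF j], of 0] Z2[OF j] by blast
    then show ?thesis unfolding L_def by (simp add: limI)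
  qed
  have L0: "\<forall>j\<in>{1..r}. L j = 0"
  proof (rule noclosed)
    show "\<forall>j\<in>{1..r}. 0 \<le> L j"
    proof
      fix j assume j: "j \<in> {1..r}"
      show "0 \<le> L j" by (rule LIMSEQ_le_const[OF zL[OF j]]) (use Z2[OF j] in blast)
    qed
    show "\<forall>j\<in>{1..r}. L j \<le> (\<Sum>k=1..r. L k * P k j)"
    proof
      fix j assume j: "j \<in> {1..r}"
      have "(\<lambda>N. z (Suc N) j) \<longlonglongrightarrow> L j" using zL[OF j] by (rule LIMSEQ_Suc)
      moreover have "(\<lambda>N. z (Suc N) j) \<longlonglongrightarrow> (\<Sum>k=1..r. L k * P k j)"
        unfolding Z1[OF j] by (intro tendsto_intros zL) auto
      ultimately have "L j = (\<Sum>k=1..r. L k * P k j)" by (rule LIMSEQ_unique)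
      then show "L j \<le> (\<Sum>k=1..r. L k * P k j)" by simp
    qed
  qed
  have SL: "(\<lambda>N. S N j) \<longlonglongrightarrow> w j" if j: "j \<in> {1..r}" for j
  proof -
    have "(\<lambda>N. w j - z N j) \<longlonglongrightarrow> w j - L j" by (intro tendsto_intros zL[OF j])
    then show ?thesis using L0 j unfolding z_def by simp
  qed
  have part1: "\<forall>j\<in>{1..r}. (\<lambda>n. matpow s P n u j) sums w j"
    using SL unfolding sums_def S_def q_def by auto
  have qk: "q N k = (\<Sum>l=1..r. S N l * P l k)" if k: "k \<in> {r+1..s}" for N k
  proof (induction N)
    case 0
    have "k \<noteq> u" using k u by auto
    then show ?case unfolding S_def using Q0 by simp
  next
    case (Suc N)
    have "(\<Sum>l=1..r. S (Suc N) l * P l k) = (\<Sum>l=1..r. S N l * P l k) + (\<Sum>l=1..r. q N l * P l k)"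
      unfolding S_def by (simp add: distrib_right sum.distrib)
    then show ?case using Q2[OF k, of N] Suc.IH by simp
  qed
  have part2: "\<forall>k\<in>{r+1..s}. (\<lambda>n. matpow s P n u k) \<longlonglongrightarrow> (\<Sum>l=1..r. w l * P l k)"
  proof
    fix k assume k: "k \<in> {r+1..s}"
    have "(\<lambda>N. \<Sum>l=1..r. S N l * P l k) \<longlonglongrightarrow> (\<Sum>l=1..r. w l * P l k)"
      by (intro tendsto_intros SL) auto
    then show "(\<lambda>n. matpow s P n u k) \<longlonglongrightarrow> (\<Sum>l=1..r. w l * P l k)"
      using qk[OF k] unfolding q_def by simp
  qed
  show ?thesis using part1 part2 by blast
qed


lemma reach_Inv: "(engel_step s r rv rm u)\<^sup>*\<^sup>* (init_state r rv u) \<sigma> \<Longrightarrow> Inv \<sigma>"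
  by (induction rule: rtranclp_induct) (auto intro: Inv_init Inv_step)

lemma final:
  assumes reach: "(engel_step s r rv rm u)\<^sup>*\<^sup>* (init_state r rv u) (c, m, b)"
    and stp: "stopped r rv u (c, m, b)"
  shows "let vu = (\<Sum>k=r+1..s. chips_into r rm m k) in
            0 < vu
            \<and> (\<forall>j\<in>{1..r}. (\<lambda>n. matpow s P n u j) sums (real (rv j * m j) / real vu))
            \<and> (\<forall>k\<in>{r+1..s}. (\<lambda>n. matpow s P n u k) \<longlonglongrightarrow> real (chips_into r rm m k) / real vu)"
proof -
  have I: "Inv (c,m,b)" by (rule reach_Inv[OF reach])
  have bT: "b" and crit: "critical_on_transient r rv u c" using stp unfolding stopped_def by auto
  define a where "a = A (c,m,b)"
  have a1: "1 \<le> a" using Inv_A[OF I] bT unfolding a_def by auto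
  have cc0: "c j = c0 j" if "j \<in> {1..r}" for j
    using crit that unfolding critical_on_transient_def c0_def critical_loading_def by auto
  have E: "int (rv j) * int (m j) = (if j = u then a else 0) + (\<Sum>k=1..r. int (m k) * int (rm k j))"
    if j: "j \<in> {1..r}" for j
    using Inv_eq[OF I j] cc0[OF j] unfolding a_def by auto
  define vu where "vu = (\<Sum>k=r+1..s. chips_into r rm m k)"
  have "(\<Sum>j=1..r. int (rv j) * int (m j)) = (\<Sum>j=1..r. (if j = u then a else 0) + (\<Sum>k=1..r. int (m k) * int (rm k j)))"
    using E by (intro sum.cong) auto
  also have "\<dots> = a + (\<Sum>j=1..r. \<Sum>k=1..r. int (m k) * int (rm k j))" using u by (simp add: sum.distrib)
  finally have s1: "(\<Sum>j=1..r. int (rv j) * int (m j)) = a + (\<Sum>j=1..r. \<Sum>k=1..r. int (m k) * int (rm k j))" .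
  have s2: "(\<Sum>j=1..r. \<Sum>k=1..r. int (m k) * int (rm k j)) = (\<Sum>k=1..r. int (m k) * (\<Sum>j=1..r. int (rm k j)))"
    by (subst sum.swap) (simp add: sum_distrib_left)
  have "(\<Sum>k=1..r. int (m k) * (\<Sum>j=1..r. int (rm k j))) = (\<Sum>k=1..r. int (m k) * int (rv k) - int (m k) * (\<Sum>j=r+1..s. int (rm k j)))"
  proof (intro sum.cong refl)
    fix k assume k: "k \<in> {1..r}"
    have "int (rv k) = (\<Sum>j=1..r. int (rm k j)) + (\<Sum>j=r+1..s. int (rm k j))"
    proof -
      have "int (rv k) = (\<Sum>j=1..s. int (rm k j))" using rm_sum[OF k] by (metis of_nat_sum)
      then show ?thesis using sum_split[of "\<lambda>j. int (rm k j)"] by simp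
    qed
    then show "int (m k) * (\<Sum>j=1..r. int (rm k j)) = int (m k) * int (rv k) - int (m k) * (\<Sum>j=r+1..s. int (rm k j))"
      by (simp add: algebra_simps)
  qed
  also have "\<dots> = (\<Sum>k=1..r. int (m k) * int (rv k)) - (\<Sum>k=1..r. int (m k) * (\<Sum>j=r+1..s. int (rm k j)))"
    by (simp add: sum_subtractf)
  finally have s3: "(\<Sum>k=1..r. int (m k) * (\<Sum>j=1..r. int (rm k j))) = (\<Sum>k=1..r. int (m k) * int (rv k)) - (\<Sum>k=1..r. int (m k) * (\<Sum>j=r+1..s. int (rm k j)))" .
  have s4: "(\<Sum>j=1..r. int (rv j) * int (m j)) = (\<Sum>k=1..r. int (m k) * int (rv k))"
    by (rule sum.cong) (auto simp: mult.commute)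
  have X: "(\<Sum>k=1..r. int (m k) * (\<Sum>j=r+1..s. int (rm k j))) = a"
    using s1 s2 s3 s4 by linarith
  have "int vu = (\<Sum>j=r+1..s. \<Sum>k=1..r. int (m k) * int (rm k j))"
    unfolding vu_def chips_into_def by simp
  also have "\<dots> = (\<Sum>k=1..r. int (m k) * (\<Sum>j=r+1..s. int (rm k j)))"
    by (subst sum.swap) (simp add: sum_distrib_left)
  finally have va: "int vu = a" using X by simp
  then have vpos: "0 < vu" using a1 by simp
  have rva: "real vu = real_of_int a" using va by (metis of_int_of_nat_eq)
  define w where "w j = real (rv j * m j) / real vu" for j
  have wnn: "\<forall>j\<in>{1..r}. 0 \<le> w j" unfolding w_def by auto
  have wk: "w k * P k j = real (m k) * real (rm k j) / real vu" if k: "k \<in> {1..r}" and j: "j \<in> {1..s}" for k j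
    using Prat[OF k j] rvpos[OF k] unfolding w_def by (simp add: field_simps)
  have weq: "\<forall>j\<in>{1..r}. w j = (if j = u then 1 else 0) + (\<Sum>k=1..r. w k * P k j)"
  proof
    fix j assume j: "j \<in> {1..r}"
    have js: "j \<in> {1..s}" using j rs by auto
    have "real_of_int (int (rv j) * int (m j)) = real_of_int ((if j = u then a else 0) + (\<Sum>k=1..r. int (m k) * int (rm k j)))"
      using E[OF j] by simp
    then have e: "real (rv j) * real (m j) = (if j = u then real vu else 0) + (\<Sum>k=1..r. real (m k) * real (rm k j))"
      using rva by simp
    have "(\<Sum>k=1..r. w k * P k j) = (\<Sum>k=1..r. real (m k) * real (rm k j)) / real vu"
      using wk js by (simp add: sum_divide_distrib)
    then show "w j = (if j = u then 1 else 0) + (\<Sum>k=1..r. w k * P k j)"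
      unfolding w_def using e vpos by (simp add: field_simps)
  qed
  note pr = prob[OF wnn weq]
  have abs: "(\<Sum>l=1..r. w l * P l k) = real (chips_into r rm m k) / real vu" if k: "k \<in> {r+1..s}" for k
  proof -
    have ks: "k \<in> {1..s}" using k by auto
    have "(\<Sum>l=1..r. w l * P l k) = (\<Sum>l=1..r. real (m l) * real (rm l k)) / real vu"
      using wk ks by (simp add: sum_divide_distrib)
    then show ?thesis unfolding chips_into_def by simp
  qed
  show ?thesis unfolding Let_def vu_def[symmetric] using vpos pr abs unfolding w_def by auto
qed

end

theorem mainTheorem1:
  fixes s r u :: nat and P :: "nat \<Rightarrow> nat \<Rightarrow> real"
    and rv :: "nat \<Rightarrow> nat" and rm :: "nat \<Rightarrow> nat \<Rightarrow> nat"
  assumes chain: "absorbing_chain s r P"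
    and rat: "\<forall>i\<in>{1..r}. 0 < rv i \<and> (\<forall>j\<in>{1..s}. P i j = real (rm i j) / real (rv i))"
    and u: "u \<in> {1..r}"
  shows "\<not> (\<exists>f. f 0 = init_state r rv u \<and> (\<forall>n. engel_step s r rv rm u (f n) (f (Suc n))))
    \<and> (\<forall>\<sigma>. (engel_step s r rv rm u)\<^sup>*\<^sup>* (init_state r rv u) \<sigma> \<longrightarrow>
           \<not> (\<exists>\<sigma>'. engel_step s r rv rm u \<sigma> \<sigma>') \<longrightarrow> stopped r rv u \<sigma>)
    \<and> (\<forall>c m b. (engel_step s r rv rm u)\<^sup>*\<^sup>* (init_state r rv u) (c, m, b)
           \<and> stopped r rv u (c, m, b) \<longrightarrow>
          (let vu = (\<Sum>k=r+1..s. chips_into r rm m k) in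
            0 < vu
            \<and> (\<forall>j\<in>{1..r}. (\<lambda>n. matpow s P n u j) sums (real (rv j * m j) / real vu))
            \<and> (\<forall>k\<in>{r+1..s}. (\<lambda>n. matpow s P n u k) \<longlonglongrightarrow> real (chips_into r rm m k) / real vu)))"
proof -
  interpret engel s r u P rv rm using assms by unfold_locales
  show ?thesis using no_infinite not_stuck final by blast
qed

end
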